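(* Let $D$ be a quadratic discriminant and $\mathcal{O}_D$ the associated quadratic order. Suppose that every rational prime number $p$ satisfying \[ p \le \begin{cases} \sqrt{|D|/3} & \text{if } D<0,\\ \sqrt{D/5} & \text{if } D>0\end{cases} \] that is irreducible in $\mathcal{O}_D$ is also prime in $\mathcal{O}_D$. Then $\mathcal{O}_D$ is a unique factorization domain.
   Context: A quadratic discriminant is a nonsquare integer $D$ with $D\equiv 0$ or $1 \pmod 4$. Write $D=4d+\sigma$ with $\sigma\in\{0,1\}$ and $d\in\mathbb{Z}$, and let $\tau=\frac{\sigma+\sqrt{D}}{2}$. Then $\mathcal{O}_D=\mathbb{Z}[\tau]=\mathbb{Z}+\mathbb{Z}\tau=\{\frac{u+v\sqrt{D}}{2}: u,v\in\mathbb{Z},\ u\equiv vD \pmod 2\}$. In a domain $R$, an element $\pi$ is irreducible if it is nonzero, not a unit, and whenever $\pi=\alpha\beta$ with $\alpha,\beta\in R$ one of $\alpha,\beta$ is a unit; $\pi$ is prime if it is nonzero, not a unit, and $\pi\mid\alpha\beta$ implies $\pi\mid\alpha$ or $\pi\mid\beta$. *)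

theory Defs
  imports Complex_Main "HOL-Computational_Algebra.Primes" "HOL-Algebra.Ring_Divisibility"
begin

definition quad_disc :: "int \<Rightarrow> bool" where
  "quad_disc D \<longleftrightarrow> (D mod 4 = 0 \<or> D mod 4 = 1) \<and> \<not> (\<exists>k::int. D = k ^ 2)"

definition quad_order :: "int \<Rightarrow> complex set" where
  "quad_order D = {(of_int u + of_int v * csqrt (of_int D)) / 2 | u v :: int. even (u - v * D)}"

definition quad_ring :: "int \<Rightarrow> complex ring" where
  "quad_ring D = \<lparr> carrier = quad_order D, monoid.mult = (*), one = 1, zero = 0, add = (+) \<rparr>"

end

theory Submission
  imports Defs
begin


lemma nonsq_aux:
  fixes a b D :: int
  assumes "a^2 = D * b^2" "b \<noteq> 0"
  shows "\<exists>k. D = k^2"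
proof -
  define g where "g = gcd a b"
  have g0: "g \<noteq> 0" using assms g_def by simp
  obtain a' b' where ab: "a = a' * g" "b = b' * g" "coprime a' b'"
    using gcd_coprime_exists[of a b] g0 g_def by blast
  have a': "a = g * a'" and b': "b = g * b'" and cop: "coprime a' b'" using ab by auto
  have "g^2 * a'^2 = g^2 * (D * b'^2)" using assms(1) a' b' by (simp add: power_mult_distrib)
  hence e: "a'^2 = D * b'^2" using g0 by simp
  have "a'^2 = b'^2 * D" using e by (simp add: mult.commute)
  hence h: "b'^2 dvd a'^2" by (rule dvdI)
  have c2: "coprime (a'^2) (b'^2)" using cop by simp
  hence c3: "coprime (b'^2) (a'^2)" using coprime_commute by blast
  have "is_unit (b'^2)" by (rule coprime_common_divisor[OF c3 dvd_refl h])
  hence "b'^2 = 1" by simp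
  hence "D = a'^2" using e by simp
  thus ?thesis by blast
qed

locale qd =
  fixes D :: int
  assumes disc: "quad_disc D"
begin

definition sg :: int where "sg = D mod 4"
definition dd :: int where "dd = D div 4"

lemma sg01: "sg = 0 \<or> sg = 1" using disc unfolding quad_disc_def sg_def by auto
lemma D_eq: "D = 4*dd + sg"
  unfolding dd_def sg_def by simp
lemma sg_sq: "sg * sg = sg" using sg01 by auto

lemma nonsq: "\<not> (\<exists>k::int. D = k^2)" using disc unfolding quad_disc_def by auto

lemma nonsq2: "a^2 = D * b^2 \<Longrightarrow> b = 0" using nonsq nonsq_aux by blast

definition tau :: complex where "tau = (of_int sg + csqrt (of_int D)) / 2"
definition emb :: "int \<Rightarrow> int \<Rightarrow> complex" where "emb x y = of_int x + of_int y * tau"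
definition nrm :: "int \<Rightarrow> int \<Rightarrow> int" where "nrm x y = x^2 + sg*x*y - dd*y^2"

lemma csq: "csqrt (of_int D) * csqrt (of_int D) = of_int D"
  by (metis power2_csqrt power2_eq_square)

lemma tau_sq: "tau * tau = of_int sg * tau + of_int dd"
proof -
  have "4 * (tau * tau) = (of_int sg)^2 + 2 * of_int sg * csqrt (of_int D) + csqrt (of_int D) * csqrt (of_int D)"
    unfolding tau_def by (simp add: field_simps power2_eq_square)
  also have "\<dots> = of_int sg + 2 * of_int sg * csqrt (of_int D) + of_int (4*dd + sg)"
  proof -
    have "(of_int sg :: complex)^2 = of_int (sg*sg)" by (simp add: power2_eq_square)
    hence "(of_int sg :: complex)^2 = of_int sg" using sg_sq by simp
    thus ?thesis using csq D_eq by simp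
  qed
  also have "\<dots> = 2 * (of_int sg * of_int sg) + 2 * of_int sg * csqrt (of_int D) + 4 * of_int dd"
  proof -
    have "(of_int sg :: complex) * of_int sg = of_int sg" by (metis of_int_mult sg_sq)
    thus ?thesis by simp
  qed
  also have "\<dots> = 4 * (of_int sg * tau + of_int dd)"
    unfolding tau_def by (simp add: field_simps)
  finally have "4 * (tau * tau) = 4 * (of_int sg * tau + of_int dd)" .
  thus ?thesis by (simp only: mult_cancel_left) simp
qed

lemma irr: "of_int a + of_int b * csqrt (of_int D) = (0::complex) \<Longrightarrow> b = 0"
proof -
  assume h: "of_int a + of_int b * csqrt (of_int D) = (0::complex)"
  hence "of_int b * csqrt (of_int D) = - of_int a" by (simp add: eq_neg_iff_add_eq_0 add.commute)
  hence "(of_int b * csqrt (of_int D)) * (of_int b * csqrt (of_int D)) = (of_int a * of_int a :: complex)" by simp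
  hence "of_int (b*b*D) = (of_int (a*a) :: complex)" using csq by (simp add: algebra_simps)
  hence "a^2 = D * b^2" by (simp only: of_int_eq_iff) (simp add: power2_eq_square algebra_simps)
  thus "b = 0" by (rule nonsq2)
qed

lemma emb_eq_iff: "emb x y = emb x' y' \<longleftrightarrow> x = x' \<and> y = y'"
proof
  assume e: "emb x y = emb x' y'"
  have "2*(emb x y - emb x' y') = of_int (2*(x - x') + (y-y')*sg) + of_int (y - y') * csqrt (of_int D)"
    unfolding emb_def tau_def by (simp add: field_simps)
  hence "of_int (2*(x - x') + (y-y')*sg) + of_int (y - y') * csqrt (of_int D) = (0::complex)"
    using e by simp
  hence "y - y' = 0" by (rule irr)
  thus "x = x' \<and> y = y'" using \<open>emb x y = emb x' y'\<close> unfolding emb_def by simp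
qed simp

lemma emb_mult: "emb x1 y1 * emb x2 y2 = emb (x1*x2 + dd*y1*y2) (x1*y2 + x2*y1 + sg*y1*y2)"
proof -
  have "emb x1 y1 * emb x2 y2 = of_int x1 * of_int x2 + (of_int x1 * of_int y2 + of_int x2 * of_int y1) * tau + of_int y1 * of_int y2 * (tau*tau)"
    unfolding emb_def by (simp add: algebra_simps)
  also have "\<dots> = emb (x1*x2 + dd*y1*y2) (x1*y2 + x2*y1 + sg*y1*y2)"
    unfolding tau_sq emb_def by (simp add: algebra_simps)
  finally show ?thesis .
qed

lemma emb_add: "emb x1 y1 + emb x2 y2 = emb (x1+x2) (y1+y2)"
  unfolding emb_def by (simp add: algebra_simps)
lemma emb_minus: "- emb x y = emb (-x) (-y)"
  unfolding emb_def by (simp add: algebra_simps)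
lemma emb_int: "of_int n = emb n 0" unfolding emb_def by simp
lemma emb_zero: "emb x y = 0 \<longleftrightarrow> x = 0 \<and> y = 0"
  using emb_eq_iff[of x y 0 0] by (simp add: emb_def)
lemma emb_smult: "of_int n * emb x y = emb (n*x) (n*y)"
  unfolding emb_def by (simp add: algebra_simps)

lemma O_iff: "z \<in> quad_order D \<longleftrightarrow> (\<exists>x y. z = emb x y)"
proof
  assume "z \<in> quad_order D"
  then obtain u v where uv: "z = (of_int u + of_int v * csqrt (of_int D)) / 2" "even (u - v*D)"
    unfolding quad_order_def by auto
  have vD: "v*D = v*(4*dd+sg)" using arg_cong[OF D_eq, of "\<lambda>t. v*t"] .
  have eq: "u - v*sg = (u - v*D) + 2*(2*v*dd)" unfolding vD by (simp add: algebra_simps)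
  have "even ((u - v*D) + 2*(2*v*dd))" by (rule dvd_add[OF uv(2)]) simp
  hence "even (u - v*sg)" by (simp only: eq)
  then obtain x where x: "u - v*sg = 2*x" by blast
  hence x': "u = 2*x + v*sg" by simp
  have "z = emb x v" unfolding uv(1) emb_def tau_def x' by (simp add: field_simps)
  thus "\<exists>x y. z = emb x y" by blast
next
  assume "\<exists>x y. z = emb x y"
  then obtain x y where z: "z = emb x y" by blast
  have "z = (of_int (2*x + y*sg) + of_int y * csqrt (of_int D)) / 2"
    unfolding z emb_def tau_def by (simp add: field_simps)
  moreover have "even ((2*x + y*sg) - y*D)"
  proof -
    have yD: "y*D = y*(4*dd+sg)" using arg_cong[OF D_eq, of "\<lambda>t. y*t"] .
    have "(2*x + y*sg) - y*D = 2*(x - 2*y*dd)" unfolding yD by (simp add: algebra_simps)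
    thus ?thesis by (simp only:) simp
  qed
  ultimately show "z \<in> quad_order D" unfolding quad_order_def by blast
qed

end


context qd begin

lemma nrm_mult: "nrm (x1*x2 + dd*y1*y2) (x1*y2 + x2*y1 + sg*y1*y2) = nrm x1 y1 * nrm x2 y2"
  unfolding nrm_def by (simp add: algebra_simps power2_eq_square)

lemma nrm_conj: "nrm (x + sg*y) (-y) = nrm x y"
  unfolding nrm_def by (simp add: algebra_simps power2_eq_square)

lemma emb_conj: "emb x y * emb (x + sg*y) (-y) = of_int (nrm x y)"
  unfolding emb_mult emb_int nrm_def by (simp add: algebra_simps power2_eq_square)

lemma nrm4: "4 * nrm x y = (2*x + sg*y)^2 - D*y^2"
proof -
  have yD: "D*y^2 = (4*dd+sg)*y^2" using arg_cong[OF D_eq, of "\<lambda>t. t*y^2"] .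
  have s: "sg*sg*y*y = sg*y*y" using sg_sq by simp
  show ?thesis unfolding yD nrm_def using s by (simp add: algebra_simps power2_eq_square)
qed

lemma nrm_zero_iff: "nrm x y = 0 \<longleftrightarrow> x = 0 \<and> y = 0"
proof
  assume "nrm x y = 0"
  hence "(2*x + sg*y)^2 = D*y^2" using nrm4[of x y] by simp
  hence "y = 0" by (rule nonsq2)
  thus "x = 0 \<and> y = 0" using \<open>nrm x y = 0\<close> unfolding nrm_def by simp
qed (simp add: nrm_def)

definition Pk :: "int \<Rightarrow> int \<Rightarrow> bool" where
  "Pk p k \<longleftrightarrow> (\<forall>X Y. (X \<noteq> 0 \<or> Y \<noteq> 0) \<longrightarrow> p^2 \<le> \<bar>nrm (p*X + k*Y) Y\<bar>)"

lemma P_shift: assumes "Pk p k" shows "Pk p (k + p*t)"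
  unfolding Pk_def
proof (intro allI impI)
  fix X Y :: int assume h: "X \<noteq> 0 \<or> Y \<noteq> 0"
  have "X + t*Y \<noteq> 0 \<or> Y \<noteq> 0" using h by auto
  hence "p^2 \<le> \<bar>nrm (p*(X + t*Y) + k*Y) Y\<bar>" using assms unfolding Pk_def by blast
  moreover have "p*(X + t*Y) + k*Y = p*X + (k + p*t)*Y" by (simp add: algebra_simps)
  ultimately show "p^2 \<le> \<bar>nrm (p*X + (k + p*t)*Y) Y\<bar>" by simp
qed

lemma P_conj: assumes "Pk p k" shows "Pk p (-k-sg)"
  unfolding Pk_def
proof (intro allI impI)
  fix X Y :: int assume h: "X \<noteq> 0 \<or> Y \<noteq> 0"
  have "X \<noteq> 0 \<or> -Y \<noteq> 0" using h by auto
  hence "p^2 \<le> \<bar>nrm (p*X + k*(-Y)) (-Y)\<bar>" using assms unfolding Pk_def by blast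
  moreover have "nrm (p*X + k*(-Y)) (-Y) = nrm (p*X + (-k-sg)*Y) Y"
    using nrm_conj[of "p*X + (-k-sg)*Y" Y] by (simp add: algebra_simps)
  ultimately show "p^2 \<le> \<bar>nrm (p*X + (-k-sg)*Y) Y\<bar>" by simp
qed

lemma P_red: assumes "Pk p k" "p > 0"
  obtains k0 where "Pk p k0" "0 \<le> 2*k0 + sg" "2*k0 + sg \<le> p"
proof -
  define t where "t = (2*k+sg) div (2*p)"
  define r where "r = (2*k+sg) mod (2*p)"
  have r0: "0 \<le> r" "r < 2*p" using assms(2) unfolding r_def by auto
  have br: "2*k + sg = 2*p*t + r" unfolding t_def r_def by simp
  define k1 where "k1 = k + p*(-t)"
  have P1: "Pk p k1" unfolding k1_def by (rule P_shift[OF assms(1)])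
  have b1: "2*k1 + sg = r" unfolding k1_def using br by (simp add: algebra_simps)
  show ?thesis
  proof (cases "r \<le> p")
    case True thus ?thesis using that P1 b1 r0 by auto
  next
    case False
    define k2 where "k2 = (-k1-sg) + p*1"
    have P2: "Pk p k2" unfolding k2_def by (rule P_shift[OF P_conj[OF P1]])
    have "2*k2 + sg = 2*p - r" unfolding k2_def using b1 by (simp add: algebra_simps)
    thus ?thesis using that P2 r0 False by auto
  qed
qed

lemma P_bound: assumes "Pk p k" "p > 0"
  shows "(D < 0 \<longrightarrow> 3*p^2 \<le> -D) \<and> (D > 0 \<longrightarrow> 5*p^2 \<le> D)"
proof -
  obtain k0 where P0: "Pk p k0" and b0: "0 \<le> 2*k0 + sg" "2*k0 + sg \<le> p"
    using P_red[OF assms] by blast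
  define b where "b = 2*k0 + sg"
  define C where "C = nrm k0 1"
  have hb: "0 \<le> b" "b \<le> p" using b0 b_def by auto
  have DC: "D = b*b - 4*C" using nrm4[of k0 1] unfolding b_def C_def by (simp add: power2_eq_square)
  have Pall: "\<And>X Y. X \<noteq> 0 \<or> Y \<noteq> 0 \<Longrightarrow> p^2 \<le> \<bar>nrm (p*X + k0*Y) Y\<bar>"
    using P0 unfolding Pk_def by blast
  have "p^2 \<le> \<bar>nrm (p*0 + k0*1) 1\<bar>" by (rule Pall) simp
  hence C1: "p*p \<le> \<bar>C\<bar>" unfolding C_def by (simp add: power2_eq_square)
  have "p^2 \<le> \<bar>nrm (p*(-1) + k0*1) 1\<bar>" by (rule Pall) simp
  moreover have "nrm (p*(-1) + k0*1) 1 = C - p*b + p*p"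
    unfolding C_def b_def nrm_def by (simp add: algebra_simps power2_eq_square)
  ultimately have C2: "p*p \<le> \<bar>C - p*b + p*p\<bar>" by (simp add: power2_eq_square)
  have bb: "b*b \<le> p*p" using hb by (simp add: mult_mono)
  have pb: "0 \<le> p*b" using hb assms(2) by simp
  have q: "0 \<le> (p-b)*(3*p-b)" using hb assms(2) by simp
  hence q': "0 \<le> 3*(p*p) - 4*(p*b) + b*b" by (simp add: algebra_simps)
  show ?thesis
  proof (intro conjI impI)
    assume "D < 0"
    hence "C > 0" using DC bb by (smt (verit) mult_nonneg_nonneg zero_le_square)
    hence "p*p \<le> C" using C1 by simp
    thus "3*p^2 \<le> -D" using DC bb by (simp add: power2_eq_square)
  next
    assume "D > 0"
    have "C < 0"
    proof (rule ccontr)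
      assume "\<not> C < 0" hence "p*p \<le> C" using C1 by simp
      thus False using DC bb \<open>D > 0\<close> assms(2) by (smt (verit) mult_pos_pos)
    qed
    hence "C - p*b + p*p \<le> 0" using C1 pb by simp
    hence "C - p*b + p*p \<le> - (p*p)" using C2 by simp
    thus "5*p^2 \<le> D" using DC q' by (simp add: power2_eq_square)
  qed
qed

lemma P_nofactor:
  assumes "Pk p k" "Factorial_Ring.prime p" "p dvd nrm k 1"
  shows "\<bar>nrm x y\<bar> \<noteq> p"
proof
  assume h: "\<bar>nrm x y\<bar> = p"
  have p2: "p \<ge> 2" using assms(2) by (simp add: prime_ge_2_int)
  have xy: "x \<noteq> 0 \<or> y \<noteq> 0" using h p2 nrm_zero_iff[of x y] by auto
  have pd: "p dvd nrm x y" using h by (metis dvd_abs_iff dvd_refl)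
  have "(x - y*k) * (x + y*sg + y*k) = nrm x y - y^2 * nrm k 1"
    unfolding nrm_def by (simp add: algebra_simps power2_eq_square)
  moreover have "p dvd nrm x y - y^2 * nrm k 1" using pd assms(3) by simp
  ultimately have "p dvd (x - y*k) \<or> p dvd (x + y*sg + y*k)"
    using assms(2) by (metis prime_dvd_mult_iff)
  thus False
  proof
    assume "p dvd (x - y*k)"
    then obtain X where X: "x - y*k = p*X" by blast
    have "X \<noteq> 0 \<or> y \<noteq> 0" using xy X by auto
    hence "p^2 \<le> \<bar>nrm (p*X + k*y) y\<bar>" using assms(1) unfolding Pk_def by blast
    moreover have "p*X + k*y = x" using X by (simp add: algebra_simps)
    ultimately show False using h p2 by (simp add: power2_eq_square)
  next
    assume "p dvd (x + y*sg + y*k)"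
    then obtain X where X: "x + y*sg + y*k = p*X" by blast
    have "X \<noteq> 0 \<or> -y \<noteq> 0" using xy X by auto
    hence "p^2 \<le> \<bar>nrm (p*X + k*(-y)) (-y)\<bar>" using assms(1) unfolding Pk_def by blast
    moreover have "p*X + k*(-y) = x + sg*y" using X by (simp add: algebra_simps)
    ultimately show False using h p2 nrm_conj[of x y] by (simp add: power2_eq_square)
  qed
qed

end


context qd begin

abbreviation QO where "QO \<equiv> quad_order D"

lemma emb_O[simp]: "emb x y \<in> QO" using O_iff by blast
lemma O_mult: "z \<in> QO \<Longrightarrow> w \<in> QO \<Longrightarrow> z*w \<in> QO"
  unfolding O_iff by (metis emb_mult)
lemma O_add: "z \<in> QO \<Longrightarrow> w \<in> QO \<Longrightarrow> z+w \<in> QO"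
  unfolding O_iff by (metis emb_add)
lemma O_minus: "z \<in> QO \<Longrightarrow> -z \<in> QO"
  unfolding O_iff by (metis emb_minus)
lemma O_int[simp]: "of_int n \<in> QO" unfolding emb_int by simp
lemma O_0[simp]: "0 \<in> QO" using O_int[of 0] by simp
lemma O_1[simp]: "1 \<in> QO" using O_int[of 1] by simp

definition Nm :: "complex \<Rightarrow> int" where
  "Nm z = (THE n. \<exists>x y. z = emb x y \<and> n = nrm x y)"

lemma Nm_emb[simp]: "Nm (emb x y) = nrm x y"
  unfolding Nm_def by (rule the_equality) (auto simp: emb_eq_iff)

lemma Nm_mult: "z \<in> QO \<Longrightarrow> w \<in> QO \<Longrightarrow> Nm (z*w) = Nm z * Nm w"
  unfolding O_iff using emb_mult nrm_mult by auto

lemma Nm_int[simp]: "Nm (of_int n) = n^2"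
  unfolding emb_int by (simp add: nrm_def)

lemma Nm_zero: "z \<in> QO \<Longrightarrow> Nm z = 0 \<longleftrightarrow> z = 0"
  unfolding O_iff using nrm_zero_iff emb_zero by auto

lemma Nm_conj: "z \<in> QO \<Longrightarrow> \<exists>z'\<in>QO. z * z' = of_int (Nm z)"
  unfolding O_iff using emb_conj emb_O by fastforce

lemma unit_iff: "z \<in> QO \<Longrightarrow> (\<exists>w\<in>QO. z*w = 1) \<longleftrightarrow> \<bar>Nm z\<bar> = 1"
proof
  assume "z \<in> QO" "\<exists>w\<in>QO. z*w = 1"
  then obtain w where w: "w \<in> QO" "z*w = 1" by blast
  have n1: "Nm (1::complex) = 1" using Nm_int[of 1] by simp
  have "Nm z * Nm w = 1" using Nm_mult[OF \<open>z \<in> QO\<close> w(1)] w(2) n1 by simp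
  thus "\<bar>Nm z\<bar> = 1" using zmult_eq_1_iff by auto
next
  assume z: "z \<in> QO" and n: "\<bar>Nm z\<bar> = 1"
  obtain z' where z': "z' \<in> QO" "z * z' = of_int (Nm z)" using Nm_conj[OF z] by blast
  have "z * (of_int (Nm z) * z') = of_int (Nm z * Nm z)" using z'(2) by (simp add: algebra_simps)
  also have "Nm z * Nm z = 1" using n abs_mult_self_eq[of "Nm z"] by simp
  finally show "\<exists>w\<in>QO. z*w = 1" using z' O_mult[OF O_int z'(1)] by auto
qed

lemma R_simps[simp]: "carrier (quad_ring D) = QO" "mult (quad_ring D) = (*)" "one (quad_ring D) = 1"
  "zero (quad_ring D) = 0" "add (quad_ring D) = (+)"
  unfolding quad_ring_def by simp_all

lemma domain_R: "domain (quad_ring D)"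
proof -
  have ag: "abelian_group (quad_ring D)"
    by (rule abelian_groupI) (auto simp: O_add intro: O_minus exI[of _ "- _"] bexI[of _ "- _"] add.assoc add.commute)
  have cm: "comm_monoid (quad_ring D)"
    by (rule comm_monoidI) (auto simp: O_mult mult.assoc mult.commute)
  have cr: "cring (quad_ring D)"
    by (rule cringI[OF ag cm]) (simp add: distrib_right)
  show ?thesis
    by (rule domain.intro[OF cr]) (unfold_locales, auto)
qed

lemma Units_R: "Units (quad_ring D) = {z \<in> QO. \<bar>Nm z\<bar> = 1}"
  unfolding Units_def using unit_iff by (auto simp: mult.commute) 

end



lemma sq_factor:
  fixes m n p :: int
  assumes "Factorial_Ring.prime p" "m*n = p^2" "\<bar>m\<bar> \<noteq> 1" "\<bar>n\<bar> \<noteq> 1"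
  shows "\<bar>m\<bar> = p"
proof -
  have "m dvd p^2" using assms(2) by (metis dvd_triv_left)
  then obtain i where i: "i \<le> 2" "normalize m = p^i" using divides_primepow[OF assms(1)] by blast
  have mi: "\<bar>m\<bar> = p^i" using i by simp
  have p0: "p > 0" using assms(1) prime_gt_0_int by blast
  have "\<bar>m\<bar> * \<bar>n\<bar> = p^2" using arg_cong[OF assms(2), of abs] by (simp add: abs_mult)
  moreover have "i = 0 \<or> i = 1 \<or> i = 2" using i(1) by auto
  ultimately show ?thesis using mi assms(3,4) p0 by auto
qed

context qd begin

abbreviation Hyp where "Hyp \<equiv> (\<forall>p::int. Factorial_Ring.prime p
            \<and> real_of_int p \<le> (if D < 0 then sqrt (real_of_int \<bar>D\<bar> / 3) else sqrt (real_of_int D / 5))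
            \<and> ring_irreducible\<^bsub>quad_ring D\<^esub> (of_int p)
          \<longrightarrow> ring_prime\<^bsub>quad_ring D\<^esub> (of_int p))"

lemma D_ne0: "D \<noteq> 0"
proof
  assume "D = 0" hence "D = 0^2" by simp
  thus False using nonsq by blast
qed

lemma key:
  assumes H: Hyp
  and IO: "I \<subseteq> QO" and Iadd: "\<And>a b. a\<in>I \<Longrightarrow> b\<in>I \<Longrightarrow> a+b\<in>I"
  and Imul: "\<And>a c. a\<in>I \<Longrightarrow> c\<in>QO \<Longrightarrow> c*a \<in> I"
  and gI: "\<gamma>\<in>I" and g0: "\<gamma>\<noteq>0" and gmin: "\<And>z. z\<in>I \<Longrightarrow> z\<noteq>0 \<Longrightarrow> \<bar>Nm \<gamma>\<bar> \<le> \<bar>Nm z\<bar>"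
  and pp: "Factorial_Ring.prime (p::int)" and dI: "\<delta>\<in>I" and wO: "\<omega>\<in>QO"
  and eq: "of_int p * \<delta> = \<gamma>*\<omega>"
  and nd: "\<not>(\<exists>w\<in>QO. \<delta> = \<gamma>*w)"
  shows False
proof -
  have p2: "p \<ge> 2" using pp prime_ge_2_int by simp
  have p4: "4 \<le> p^2"
  proof -
    have "2*2 \<le> p*p" using p2 by (intro mult_mono) auto
    thus ?thesis by (simp add: power2_eq_square)
  qed
  have gO: "\<gamma> \<in> QO" and dO: "\<delta> \<in> QO" using IO gI dI by auto
  have Ng: "\<bar>Nm \<gamma>\<bar> > 0" using Nm_zero[OF gO] g0 by simp
  define inM where "inM z \<longleftrightarrow> (\<exists>u\<in>QO. \<exists>v\<in>QO. z = of_int p * u + v*\<omega>)" for z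
  have M1: "p^2 \<le> \<bar>Nm z\<bar>" if "inM z" "z \<noteq> 0" for z
  proof -
    obtain u v where uv: "u\<in>QO" "v\<in>QO" "z = of_int p * u + v*\<omega>" using \<open>inM z\<close> unfolding inM_def by blast
    define t where "t = u*\<gamma> + v*\<delta>"
    have tI: "t \<in> I" unfolding t_def using Iadd Imul gI dI uv by blast
    have zO: "z \<in> QO" using uv O_add O_mult O_int wO by auto
    have "\<gamma>*z = of_int p*(u*\<gamma>) + v*(\<gamma>*\<omega>)" unfolding uv(3) by (simp add: algebra_simps)
    also have "\<dots> = of_int p * t" unfolding t_def eq[symmetric] by (simp add: algebra_simps)
    finally have gz: "\<gamma>*z = of_int p * t" .
    have t0: "t \<noteq> 0" using gz g0 \<open>z\<noteq>0\<close> p2 by auto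
    have tO: "t \<in> QO" using IO tI by auto
    have gt: "\<bar>Nm \<gamma>\<bar> \<le> \<bar>Nm t\<bar>" using gmin tI t0 by blast
    have "Nm \<gamma> * Nm z = p^2 * Nm t" using Nm_mult[OF gO zO] Nm_mult[OF O_int tO] gz by simp
    hence "\<bar>Nm \<gamma> * Nm z\<bar> = \<bar>p^2 * Nm t\<bar>" by simp
    hence "\<bar>Nm \<gamma>\<bar> * \<bar>Nm z\<bar> = p^2 * \<bar>Nm t\<bar>" by (simp add: abs_mult)
    moreover have "p^2 * \<bar>Nm \<gamma>\<bar> \<le> p^2 * \<bar>Nm t\<bar>" using gt by (simp add: mult_left_mono)
    ultimately have "\<bar>Nm \<gamma>\<bar> * p^2 \<le> \<bar>Nm \<gamma>\<bar> * \<bar>Nm z\<bar>" by (simp add: mult.commute)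
    thus ?thesis using Ng by simp
  qed
  have Madd: "inM (a+b)" if ha: "inM a" and hb: "inM b" for a b
  proof -
    obtain u1 v1 where 1: "u1\<in>QO" "v1\<in>QO" "a = of_int p * u1 + v1*\<omega>" using ha unfolding inM_def by blast
    obtain u2 v2 where 2: "u2\<in>QO" "v2\<in>QO" "b = of_int p * u2 + v2*\<omega>" using hb unfolding inM_def by blast
    have "a + b = of_int p * (u1+u2) + (v1+v2)*\<omega>" using 1 2 by (simp add: algebra_simps)
    thus ?thesis unfolding inM_def using 1 2 O_add by blast
  qed
  have Mmul: "inM (a*c)" if ha: "inM a" and hc: "c \<in> QO" for a c
  proof -
    obtain u1 v1 where 1: "u1\<in>QO" "v1\<in>QO" "a = of_int p * u1 + v1*\<omega>" using ha unfolding inM_def by blast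
    have "a * c = of_int p * (u1*c) + (v1*c)*\<omega>" using 1 by (simp add: algebra_simps)
    thus ?thesis unfolding inM_def using 1 hc O_mult by blast
  qed
  have Mp: "inM (of_int p * c)" if "c \<in> QO" for c
    unfolding inM_def using that by (intro bexI[of _ c] bexI[of _ 0]) auto
  have Mw: "inM \<omega>"
    unfolding inM_def by (intro bexI[of _ 0] bexI[of _ 1]) auto
  have M2: "p dvd n" if hn: "inM (of_int n)" for n
  proof (rule ccontr)
    assume "\<not> p dvd n"
    hence "coprime p n" using prime_imp_coprime[OF pp] by blast
    hence "gcd p n = 1" by simp
    then obtain s t where st: "s*p + t*n = 1" using bezout_int[of p n] by auto
    have "inM (of_int p * of_int s + of_int n * of_int t)"
      by (rule Madd[OF Mp Mmul[OF hn]]) auto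
    moreover have "of_int p * of_int s + of_int n * of_int t = (1::complex)"
      using arg_cong[OF st, of "of_int :: int \<Rightarrow> complex"] by (simp add: algebra_simps)
    ultimately have "inM 1" by simp
    hence "p^2 \<le> \<bar>Nm 1\<bar>" using M1 by simp
    moreover have "Nm 1 = 1" using Nm_int[of 1] by simp
    ultimately show False using p4 by simp
  qed
  obtain a b where ab: "\<omega> = emb a b" using wO O_iff by blast
  have nb: "\<not> p dvd b"
  proof
    assume "p dvd b" then obtain b' where b': "b = p*b'" ..
    have "of_int a = of_int p * emb 0 (-b') + \<omega>"
      unfolding ab b' emb_smult emb_add by (simp add: emb_int)
    hence "inM (of_int a)" using Madd[OF Mp Mw] by simp
    hence "p dvd a" by (rule M2)
    then obtain a' where a': "a = p*a'" ..
    have "\<omega> = of_int p * emb a' b'" unfolding ab a' b' emb_smult by simp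
    hence "of_int p * \<delta> = of_int p * (\<gamma> * emb a' b')" using eq by (simp add: algebra_simps)
    hence "\<delta> = \<gamma> * emb a' b'" using p2 by simp
    thus False using nd emb_O by blast
  qed
  have "coprime p b" using prime_imp_coprime[OF pp nb] .
  hence "gcd b p = 1" by (simp add: coprime_commute)
  then obtain b' j where bj: "b'*b + j*p = 1" using bezout_int[of b p] by auto
  define k where "k = a*b'"
  have ek: "emb k 1 = of_int p * emb 0 j + \<omega> * of_int b'"
    unfolding ab k_def emb_smult emb_add mult.commute[of _ "of_int b'"]
    using bj by (simp add: algebra_simps)
  have Mk: "inM (emb k 1)" unfolding ek by (rule Madd[OF Mp Mmul[OF Mw]]) auto
  have Pk: "Pk p k" unfolding Pk_def
  proof (intro allI impI)
    fix X Y :: int assume XY: "X \<noteq> 0 \<or> Y \<noteq> 0"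
    have e: "emb (p*X + k*Y) Y = of_int p * emb X 0 + emb k 1 * of_int Y"
      unfolding emb_smult emb_add mult.commute[of _ "of_int Y"] by (simp add: algebra_simps)
    have "inM (emb (p*X + k*Y) Y)" unfolding e by (rule Madd[OF Mp Mmul[OF Mk]]) auto
    moreover have "emb (p*X + k*Y) Y \<noteq> 0" using XY p2 unfolding emb_zero by auto
    ultimately show "p^2 \<le> \<bar>nrm (p*X + k*Y) Y\<bar>" using M1 by fastforce
  qed
  have ek2: "emb k 1 * emb (k + sg) (-1) = of_int (nrm k 1)" using emb_conj[of k 1] by simp
  have "inM (of_int (nrm k 1))" using Mmul[OF Mk emb_O, of "k+sg" "-1"] unfolding ek2 .
  hence pdk: "p dvd nrm k 1" by (rule M2)
  have bnd: "(D < 0 \<longrightarrow> 3*p^2 \<le> -D) \<and> (D > 0 \<longrightarrow> 5*p^2 \<le> D)" using P_bound[OF Pk] p2 by simp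
  have rb: "real_of_int p \<le> (if D < 0 then sqrt (real_of_int \<bar>D\<bar> / 3) else sqrt (real_of_int D / 5))"
  proof (cases "D < 0")
    case True
    hence "real_of_int (3*p^2) \<le> real_of_int (-D)" using bnd by (simp only: of_int_le_iff)
    hence "(real_of_int p)^2 \<le> real_of_int \<bar>D\<bar> / 3" using True by simp
    thus ?thesis using True by (simp add: real_le_rsqrt)
  next
    case False
    hence "D > 0" using D_ne0 by simp
    hence "real_of_int (5*p^2) \<le> real_of_int D" using bnd by (simp only: of_int_le_iff)
    hence "(real_of_int p)^2 \<le> real_of_int D / 5" by simp
    thus ?thesis using False by (simp add: real_le_rsqrt)
  qed
  have nofac: "\<bar>nrm x y\<bar> \<noteq> p" for x y using P_nofactor[OF Pk pp pdk] .
  interpret R: domain "quad_ring D" by (rule domain_R)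
  have irr: "ring_irreducible\<^bsub>quad_ring D\<^esub> (of_int p)"
  proof (rule R.ring_irreducibleI)
    show "of_int p \<in> carrier (quad_ring D) - {\<zero>\<^bsub>quad_ring D\<^esub>}" using p2 by simp
    show "of_int p \<notin> Units (quad_ring D)" unfolding Units_R using p4 by simp
    fix x y assume xy: "x \<in> carrier (quad_ring D)" "y \<in> carrier (quad_ring D)"
      "of_int p = x \<otimes>\<^bsub>quad_ring D\<^esub> y"
    show "x \<in> Units (quad_ring D) \<or> y \<in> Units (quad_ring D)"
    proof (rule ccontr)
      assume nu: "\<not> ?thesis"
      have xO: "x \<in> QO" "y \<in> QO" using xy by auto
      have "Nm (x*y) = p^2" using xy(3)[symmetric] by simp
      hence "Nm x * Nm y = p^2" using Nm_mult[OF xO] by simp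
      hence "\<bar>Nm x\<bar> = p" using sq_factor[OF pp] nu xO unfolding Units_R by blast
      moreover obtain x1 y1 where "x = emb x1 y1" using xO O_iff by blast
      ultimately show False using nofac by simp
    qed
  qed
  hence "ring_prime\<^bsub>quad_ring D\<^esub> (of_int p)" using H pp rb by blast
  hence pr: "Divisibility.prime (quad_ring D) (of_int p)" unfolding ring_prime_def by blast
  obtain q where q: "nrm k 1 = p*q" using pdk by blast
  have "of_int p divides\<^bsub>quad_ring D\<^esub> (emb k 1 \<otimes>\<^bsub>quad_ring D\<^esub> emb (k + sg) (-1))"
    unfolding factor_def using ek2 q by (intro bexI[of _ "of_int q"]) auto
  hence "of_int p divides\<^bsub>quad_ring D\<^esub> emb k 1 \<or> of_int p divides\<^bsub>quad_ring D\<^esub> emb (k + sg) (-1)"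
    using pr unfolding Divisibility.prime_def by auto
  thus False
  proof
    assume "of_int p divides\<^bsub>quad_ring D\<^esub> emb k 1"
    then obtain c where c: "c\<in>QO" "emb k 1 = of_int p * c" unfolding factor_def by auto
    obtain x y where "c = emb x y" using c O_iff by blast
    hence "emb k 1 = emb (p*x) (p*y)" using c emb_smult by simp
    hence "p*y = 1" using emb_eq_iff by simp
    thus False using p2 pos_zmult_eq_1_iff[of p y] by simp
  next
    assume "of_int p divides\<^bsub>quad_ring D\<^esub> emb (k + sg) (-1)"
    then obtain c where c: "c\<in>QO" "emb (k + sg) (-1) = of_int p * c" unfolding factor_def by auto
    obtain x y where "c = emb x y" using c O_iff by blast
    hence "emb (k + sg) (-1) = emb (p*x) (p*y)" using c emb_smult by simp
    hence "p*(-y) = 1" using emb_eq_iff by simp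
    thus False using p2 pos_zmult_eq_1_iff[of p "-y"] by simp
  qed
qed

end


context qd begin

lemma bez:
  assumes H: Hyp and aO: "\<alpha> \<in> QO" and bO: "\<beta> \<in> QO" and a0: "\<alpha> \<noteq> 0"
  shows "\<exists>\<gamma>\<in>QO. (\<exists>u\<in>QO. \<exists>v\<in>QO. \<gamma> = u*\<alpha> + v*\<beta>) \<and> (\<exists>w\<in>QO. \<alpha> = \<gamma>*w) \<and> (\<exists>w\<in>QO. \<beta> = \<gamma>*w)"
proof -
  define I where "I = {u*\<alpha> + v*\<beta> | u v. u \<in> QO \<and> v \<in> QO}"
  have IO: "I \<subseteq> QO" unfolding I_def using aO bO O_add O_mult by blast
  have Iadd: "a+b \<in> I" if ha: "a \<in> I" and hb: "b \<in> I" for a b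
  proof -
    obtain u1 v1 where 1: "u1 \<in> QO" "v1 \<in> QO" "a = u1*\<alpha> + v1*\<beta>" using ha unfolding I_def by blast
    obtain u2 v2 where 2: "u2 \<in> QO" "v2 \<in> QO" "b = u2*\<alpha> + v2*\<beta>" using hb unfolding I_def by blast
    have "a + b = (u1+u2)*\<alpha> + (v1+v2)*\<beta>" using 1 2 by (simp add: algebra_simps)
    thus ?thesis unfolding I_def using 1 2 O_add by blast
  qed
  have Imul: "c*a \<in> I" if ha: "a \<in> I" and hc: "c \<in> QO" for a c
  proof -
    obtain u1 v1 where 1: "u1 \<in> QO" "v1 \<in> QO" "a = u1*\<alpha> + v1*\<beta>" using ha unfolding I_def by blast
    have "c*a = (c*u1)*\<alpha> + (c*v1)*\<beta>" using 1 by (simp add: algebra_simps)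
    thus ?thesis unfolding I_def using 1 hc O_mult by blast
  qed
  have aI: "\<alpha> \<in> I" unfolding I_def by (intro CollectI exI[of _ 1] exI[of _ 0]) auto
  have bI: "\<beta> \<in> I" unfolding I_def by (intro CollectI exI[of _ 0] exI[of _ 1]) auto
  define P where "P n \<longleftrightarrow> (\<exists>z\<in>I. z \<noteq> 0 \<and> n = nat \<bar>Nm z\<bar>)" for n
  have "P (nat \<bar>Nm \<alpha>\<bar>)" unfolding P_def using aI a0 by blast
  hence "P (LEAST n. P n)" by (rule LeastI)
  then obtain \<gamma> where gI: "\<gamma> \<in> I" and g0: "\<gamma> \<noteq> 0" and gm: "(LEAST n. P n) = nat \<bar>Nm \<gamma>\<bar>"
    unfolding P_def by blast
  have gmin: "\<bar>Nm \<gamma>\<bar> \<le> \<bar>Nm z\<bar>" if "z \<in> I" "z \<noteq> 0" for z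
  proof -
    have "P (nat \<bar>Nm z\<bar>)" unfolding P_def using that by blast
    hence "(LEAST n. P n) \<le> nat \<bar>Nm z\<bar>" by (rule Least_le)
    thus ?thesis using gm by simp
  qed
  have gO: "\<gamma> \<in> QO" using gI IO by auto
  have dv: "\<exists>w\<in>QO. \<delta> = \<gamma>*w" if dI: "\<delta> \<in> I" for \<delta>
  proof (rule ccontr)
    assume nd: "\<not> (\<exists>w\<in>QO. \<delta> = \<gamma>*w)"
    have dO: "\<delta> \<in> QO" using dI IO by auto
    define E where "E e \<longleftrightarrow> e > 0 \<and> (\<exists>w\<in>QO. of_nat e * \<delta> = \<gamma>*w)" for e :: nat
    obtain z' where z': "z' \<in> QO" "\<gamma> * z' = of_int (Nm \<gamma>)" using Nm_conj[OF gO] by blast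
    have Ng: "Nm \<gamma> \<noteq> 0" using Nm_zero[OF gO] g0 by simp
    have "E (nat \<bar>Nm \<gamma>\<bar>)"
    proof (cases "Nm \<gamma> > 0")
      case True
      have "of_nat (nat \<bar>Nm \<gamma>\<bar>) * \<delta> = \<gamma> * (z' * \<delta>)"
        using True z'(2) by (simp add: algebra_simps)
      thus ?thesis unfolding E_def using True O_mult[OF z'(1) dO] by auto
    next
      case False
      hence "Nm \<gamma> < 0" using Ng by simp
      hence "of_nat (nat \<bar>Nm \<gamma>\<bar>) * \<delta> = \<gamma> * (-(z' * \<delta>))"
        using z'(2) by (simp add: algebra_simps)
      moreover have "0 < nat \<bar>Nm \<gamma>\<bar>" using Ng by simp
      ultimately show ?thesis unfolding E_def using O_minus[OF O_mult[OF z'(1) dO]] by blast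
    qed
    hence E0: "E (LEAST e. E e)" by (rule LeastI)
    define e0 where "e0 = (LEAST e. E e)"
    obtain w0 where w0: "w0 \<in> QO" "of_nat e0 * \<delta> = \<gamma> * w0" and e0p: "e0 > 0"
      using E0 unfolding E_def e0_def by blast
    have "e0 \<noteq> 1" using w0 nd by auto
    then obtain q :: nat where q: "Factorial_Ring.prime q" "q dvd e0" using prime_factor_nat by blast
    then obtain f where f: "e0 = q*f" by blast
    have q2: "q \<ge> 2" using q(1) prime_ge_2_nat by blast
    have f0: "f > 0" using f e0p by (cases "f = 0") auto
    have "f < e0" using f q2 f0 by simp
    hence "\<not> E f" unfolding e0_def by (rule not_less_Least)
    hence nd': "\<not> (\<exists>w\<in>QO. of_nat f * \<delta> = \<gamma>*w)" using f0 unfolding E_def by blast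
    have "(of_nat f :: complex) \<in> QO" using O_int[of "int f"] by simp
    hence fI: "of_nat f * \<delta> \<in> I" using Imul[OF dI] by simp
    have "of_int (int q) * (of_nat f * \<delta>) = \<gamma> * w0" using w0(2) f by (simp add: algebra_simps)
    moreover have "Factorial_Ring.prime (int q)" using q(1) by simp
    ultimately show False using key[OF H IO Iadd Imul gI g0 gmin _ fI w0(1)] nd' by blast
  qed
  obtain u v where uv: "u \<in> QO" "v \<in> QO" "\<gamma> = u*\<alpha> + v*\<beta>" using gI unfolding I_def by blast
  show ?thesis using gO uv dv[OF aI] dv[OF bI] by blast
qed

lemma irr_prime:
  assumes H: Hyp and pO: "\<pi> \<in> QO" and p0: "\<pi> \<noteq> 0"
  and fac: "\<And>a b. a \<in> QO \<Longrightarrow> b \<in> QO \<Longrightarrow> \<pi> = a*b \<Longrightarrow> (\<exists>a'\<in>QO. a*a' = 1) \<or> (\<exists>b'\<in>QO. b*b' = 1)"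
  and aO: "a \<in> QO" and bO: "b \<in> QO" and cO: "c \<in> QO" and abc: "a*b = \<pi>*c"
  and na: "\<not>(\<exists>d\<in>QO. a = \<pi>*d)"
  shows "\<exists>d\<in>QO. b = \<pi>*d"
proof -
  obtain \<gamma> u v w w' where g: "\<gamma> \<in> QO" "u \<in> QO" "v \<in> QO" "\<gamma> = u*\<pi> + v*a"
    "w \<in> QO" "\<pi> = \<gamma>*w" "w' \<in> QO" "a = \<gamma>*w'"
    using bez[OF H pO aO p0] by blast
  have "(\<exists>g'\<in>QO. \<gamma>*g' = 1) \<or> (\<exists>w''\<in>QO. w*w'' = 1)" using fac[OF g(1) g(5) g(6)] .
  thus ?thesis
  proof
    assume "\<exists>w''\<in>QO. w*w'' = 1"
    then obtain w'' where w'': "w'' \<in> QO" "w*w'' = 1" by blast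
    have "\<pi>*w'' = \<gamma>*(w*w'')" using g(6) by (simp add: mult.assoc)
    hence "\<gamma> = \<pi>*w''" using w''(2) by simp
    hence "a = \<pi>*(w''*w')" using g(8) by (simp add: mult.assoc)
    thus ?thesis using na O_mult[OF w''(1) g(7)] by blast
  next
    assume "\<exists>g'\<in>QO. \<gamma>*g' = 1"
    then obtain g' where g': "g' \<in> QO" "\<gamma>*g' = 1" by blast
    have "b = (\<gamma>*g')*b" using g'(2) by simp
    also have "\<dots> = g'*(u*\<pi>*b + v*(a*b))" unfolding g(4) by (simp add: algebra_simps)
    also have "\<dots> = \<pi> * (g'*(u*b + v*c))" unfolding abc by (simp add: algebra_simps)
    finally have "b = \<pi> * (g'*(u*b + v*c))" .
    moreover have "g'*(u*b + v*c) \<in> QO" using g'(1) g(2,3) bO cO by (intro O_mult O_add) auto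
    ultimately show ?thesis by blast
  qed
qed

end


context qd begin

lemma main: assumes H: Hyp shows "factorial_domain (quad_ring D)"
proof -
  interpret R: domain "quad_ring D" by (rule domain_R)
  have dcc: "divisor_chain_condition_monoid (mult_of (quad_ring D))"
  proof (rule divisor_chain_condition_monoid.intro[OF R.mult_of.is_comm_monoid_cancel])
    show "divisor_chain_condition_monoid_axioms (mult_of (quad_ring D))"
    proof
      have "{(x, y). x \<in> carrier (mult_of (quad_ring D)) \<and> y \<in> carrier (mult_of (quad_ring D)) \<and>
          properfactor (mult_of (quad_ring D)) x y} \<subseteq> measure (\<lambda>z. nat \<bar>Nm z\<bar>)"
      proof (rule subsetI, clarify)
        fix x y assume x: "x \<in> carrier (mult_of (quad_ring D))" and y: "y \<in> carrier (mult_of (quad_ring D))"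
          and pf: "properfactor (mult_of (quad_ring D)) x y"
        have xO: "x \<in> QO" "x \<noteq> 0" using x by auto
        have yO: "y \<in> QO" "y \<noteq> 0" using y by auto
        have "x divides\<^bsub>mult_of (quad_ring D)\<^esub> y" using pf unfolding properfactor_def by blast
        then obtain c where c: "c \<in> QO" "c \<noteq> 0" "y = x*c" unfolding factor_def by auto
        have nd: "\<not> y divides\<^bsub>mult_of (quad_ring D)\<^esub> x" using pf unfolding properfactor_def by blast
        have "\<bar>Nm c\<bar> \<noteq> 1"
        proof
          assume "\<bar>Nm c\<bar> = 1"
          then obtain c' where c': "c' \<in> QO" "c*c' = 1" using unit_iff[OF c(1)] by blast
          have "y*c' = x*(c*c')" using c(3) by (simp add: mult.assoc)
          hence "x = y*c'" using c'(2) by simp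
          moreover have "c' \<noteq> 0" using c'(2) by auto
          ultimately have "y divides\<^bsub>mult_of (quad_ring D)\<^esub> x" unfolding factor_def using c'(1) by auto
          thus False using nd by blast
        qed
        moreover have "Nm c \<noteq> 0" using Nm_zero[OF c(1)] c(2) by simp
        ultimately have c2: "1 < \<bar>Nm c\<bar>" by linarith
        have x0: "0 < \<bar>Nm x\<bar>" using Nm_zero[OF xO(1)] xO(2) by simp
        have "\<bar>Nm x\<bar> * 1 < \<bar>Nm x\<bar> * \<bar>Nm c\<bar>" by (rule mult_strict_left_mono[OF c2 x0])
        also have "\<dots> = \<bar>Nm y\<bar>" using c(3) Nm_mult[OF xO(1) c(1)] by (simp add: abs_mult)
        finally show "(x, y) \<in> measure (\<lambda>z. nat \<bar>Nm z\<bar>)" by simp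
      qed
      thus "wf {(x, y). x \<in> carrier (mult_of (quad_ring D)) \<and> y \<in> carrier (mult_of (quad_ring D)) \<and>
          properfactor (mult_of (quad_ring D)) x y}" by (rule wf_subset[OF wf_measure])
    qed
  qed
  have pc: "primeness_condition_monoid (mult_of (quad_ring D))"
  proof (rule primeness_condition_monoid.intro[OF R.mult_of.is_comm_monoid_cancel])
    show "primeness_condition_monoid_axioms (mult_of (quad_ring D))"
    proof
      fix a assume a: "a \<in> carrier (mult_of (quad_ring D))" "irreducible (mult_of (quad_ring D)) a"
      have aO: "a \<in> QO" "a \<noteq> 0" using a(1) by auto
      have aC: "a \<in> carrier (quad_ring D)" using aO by simp
      have ri: "ring_irreducible\<^bsub>quad_ring D\<^esub> a"
        by (rule R.ring_irreducibleI') (use aO a(2) in auto)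
      have fac: "(\<exists>a'\<in>QO. x*a' = 1) \<or> (\<exists>b'\<in>QO. y*b' = 1)" if hx: "x \<in> QO" and hy: "y \<in> QO" and hxy: "a = x*y" for x y
      proof -
        have "a = x \<otimes>\<^bsub>quad_ring D\<^esub> y" using hxy by simp
        hence "x \<in> Units (quad_ring D) \<or> y \<in> Units (quad_ring D)"
          using R.ring_irreducibleE(5)[OF aC ri, of x y] hx hy by simp
        thus ?thesis unfolding Units_R using unit_iff hx hy by blast
      qed
      have nu: "a \<notin> Units (quad_ring D)" using R.ring_irreducibleE(4)[OF aC ri] .
      have "Divisibility.prime (quad_ring D) a"
      proof (rule primeI)
        show "a \<notin> Units (quad_ring D)" by (rule nu)
        fix x y assume xy: "x \<in> carrier (quad_ring D)" "y \<in> carrier (quad_ring D)"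
          "a divides\<^bsub>quad_ring D\<^esub> x \<otimes>\<^bsub>quad_ring D\<^esub> y"
        obtain c where c: "c \<in> QO" "x*y = a*c" using xy(3) unfolding factor_def by auto
        have xO: "x \<in> QO" "y \<in> QO" using xy(1,2) by auto
        show "a divides\<^bsub>quad_ring D\<^esub> x \<or> a divides\<^bsub>quad_ring D\<^esub> y"
        proof (cases "\<exists>d\<in>QO. x = a*d")
          case True thus ?thesis unfolding factor_def by simp
        next
          case False
          have "\<exists>d\<in>QO. y = a*d" by (rule irr_prime[OF H aO(1) aO(2) fac xO(1) xO(2) c(1) c(2) False])
          thus ?thesis unfolding factor_def by simp
        qed
      qed
      thus "Divisibility.prime (mult_of (quad_ring D)) a" using R.prime_eq_prime_mult[OF aC] by simp
    qed
  qed
  have "factorial_monoid (mult_of (quad_ring D))"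
    using factorial_condition_one[THEN iffD1, OF conjI[OF dcc pc]] .
  thus ?thesis unfolding factorial_domain_def using R.domain_axioms by simp
qed

end


theorem theorem1:
  fixes D :: int
  assumes "quad_disc D"
    and "\<forall>p::int. Factorial_Ring.prime p
            \<and> real_of_int p \<le> (if D < 0 then sqrt (real_of_int \<bar>D\<bar> / 3) else sqrt (real_of_int D / 5))
            \<and> ring_irreducible\<^bsub>quad_ring D\<^esub> (of_int p)
          \<longrightarrow> ring_prime\<^bsub>quad_ring D\<^esub> (of_int p)"
  shows "factorial_domain (quad_ring D)"
proof -
  interpret qd D by (rule qd.intro) (rule assms(1))
  show ?thesis by (rule main) (rule assms(2))
qed

end
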